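(* Let $f=\prod_{i=1}^n(x-r_i)^{e_i}\in k[x]$ with $r_1,\ldots,r_n\in k$ pairwise distinct and $e_i\ge1$. Then \[\det\Sigma(f)=\pm\prod_{1\le i<j\le n}(r_i-r_j)^{e_ie_j},\qquad\text{hence}\qquad \mathfrak{D}(f)=\prod_{1\le i<j\le n}(r_i-r_j)^{2e_ie_j}.\]
   Context: Let $N=\sum_ie_i$. $\Sigma(f)$ is the $N\times N$ matrix whose columns are indexed by pairs $(\ell,j)$ with $1\le\ell\le n$, $1\le j\le e_\ell$ (ordered lexicographically) and rows by $i=0,\ldots,N-1$, with $(i,(\ell,j))$ entry the coefficient of $x^i$ in $f/(x-r_\ell)^j$; equivalently $\Sigma(f)^\intercal$ is the change-of-basis matrix from the monomial basis $\{1,x,\ldots,x^{N-1}\}$ of $k[x]/(f)$ to the Newton basis $\{f/(x-r_\ell)^j\}$. The duplicant is $\mathfrak{D}(f):=(\det\Sigma(f))^2$. *)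

theory Defs
  imports "HOL-Computational_Algebra.Polynomial" "Jordan_Normal_Form.Determinant"
begin

definition root_poly :: "nat \<Rightarrow> (nat \<Rightarrow> 'a::field) \<Rightarrow> (nat \<Rightarrow> nat) \<Rightarrow> 'a poly" where
  "root_poly n r e = (\<Prod>l=1..n. [:- r l, 1:] ^ e l)"

definition sigma_cols :: "nat \<Rightarrow> (nat \<Rightarrow> nat) \<Rightarrow> (nat \<times> nat) list" where
  "sigma_cols n e = concat (map (\<lambda>l. map (\<lambda>j. (l, j)) [1..<e l + 1]) [1..<n + 1])"

definition Sigma_mat :: "nat \<Rightarrow> (nat \<Rightarrow> 'a::field) \<Rightarrow> (nat \<Rightarrow> nat) \<Rightarrow> 'a mat" where
  "Sigma_mat n r e =
     (let f = root_poly n r e; cs = sigma_cols n e; N = (\<Sum>l=1..n. e l) in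
      mat N N (\<lambda>(i, c). case cs ! c of (l, j) \<Rightarrow> coeff (f div [:- r l, 1:] ^ j) i))"

definition duplicant :: "nat \<Rightarrow> (nat \<Rightarrow> 'a::field) \<Rightarrow> (nat \<Rightarrow> nat) \<Rightarrow> 'a" where
  "duplicant n r e = (det (Sigma_mat n r e))\<^sup>2"

end

theory Submission
  imports Defs
begin

definition pm :: "'a::comm_ring_1 \<Rightarrow> 'a \<Rightarrow> bool" where
  "pm a b \<longleftrightarrow> a = b \<or> a = - b"

lemma pm_refl: "pm a a" by (simp add: pm_def)
lemma pm_mult: "pm a b \<Longrightarrow> pm c d \<Longrightarrow> pm (a * c) (b * d)"
  unfolding pm_def by auto
lemma pm_trans: "pm a b \<Longrightarrow> pm b c \<Longrightarrow> pm a c"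
  unfolding pm_def by auto
lemma pm_neg: "pm a (- b) = pm a b" unfolding pm_def by auto
lemma pm_power: "pm a b \<Longrightarrow> pm (a ^ k) (b ^ k)"
  by (induction k) (auto intro: pm_mult pm_refl)
lemma pm_prod: "(\<And>i. i \<in> A \<Longrightarrow> pm (f i) (g i)) \<Longrightarrow> pm (prod f A) (prod g A)"
  by (induction A rule: infinite_finite_induct) (auto intro: pm_mult pm_refl)
lemma pm_diff: "pm (a - b) (b - a)" unfolding pm_def by auto

definition cm :: "nat \<Rightarrow> 'a::field poly list \<Rightarrow> 'a mat" where
  "cm N ps = mat N N (\<lambda>(i, c). coeff (ps ! c) i)"

lemma cm_mult:
  fixes T :: "'a::field mat"
  assumes T: "T \<in> carrier_mat N N"
    and eq: "\<And>k. k < N \<Longrightarrow> ps ! k = (\<Sum>d<N. smult (T $$ (d,k)) (qs ! d))"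
  shows "cm N ps = cm N qs * T"
proof (rule eq_matI)
  fix i j assume i: "i < dim_row (cm N qs * T)" and j: "j < dim_col (cm N qs * T)"
  hence i: "i < N" and j: "j < N" using T by (auto simp: cm_def)
  have "(cm N qs * T) $$ (i,j) = (\<Sum>d<N. coeff (qs ! d) i * T $$ (d,j))"
    using i j T by (auto simp: cm_def scalar_prod_def intro!: sum.cong)
  also have "\<dots> = coeff (ps ! j) i"
    using eq[OF j] by (simp add: coeff_sum mult.commute)
  finally show "cm N ps $$ (i, j) = (cm N qs * T) $$ (i, j)" using i j by (simp add: cm_def)
qed (use T in \<open>auto simp: cm_def\<close>)

lemma sum_monoms_lt:
  assumes "\<And>i. i \<ge> M \<Longrightarrow> coeff q i = 0"
  shows "(\<Sum>d<M. monom (coeff q d) d) = q"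
proof (rule poly_eqI)
  fix i
  have "coeff (\<Sum>d<M. monom (coeff q d) d) i = (\<Sum>d<M. if d = i then coeff q d else 0)"
    by (simp add: coeff_sum coeff_monom eq_commute)
  also have "\<dots> = (if i < M then coeff q i else 0)"
    by (simp add: sum.delta')
  also have "\<dots> = coeff q i" using assms[of i] by auto
  finally show "coeff (\<Sum>d<M. monom (coeff q d) d) i = coeff q i" .
qed

lemma coeff_lin_monom: fixes c :: "'a::field"
  shows
  "coeff ([:-c, 1:] * monom 1 k) i =
     (if i = Suc k then 1 else if i = k then - c else 0)"
proof -
  have e: "[:-c,1:] = monom 1 1 + monom (-c) 0"
    by (simp add: poly_eq_iff coeff_monom coeff_pCons split: nat.split)
  have "coeff ([:-c, 1:] * monom 1 k) i = coeff (monom 1 (Suc k) + monom (-c) k) i"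
    by (simp only: e distrib_right mult_monom) simp
  thus ?thesis by (simp add: coeff_monom)
qed

lemma smult_L_monom: fixes a :: "'a::field" shows "smult a (L * monom 1 d) = L * monom a d"
proof -
  have e: "smult a (monom 1 d) = monom a d" by (simp add: smult_monom)
  have "smult a (L * monom 1 d) = L * smult a (monom 1 d)" by (rule mult_smult_right[symmetric])
  thus ?thesis by (simp only: e)
qed

lemma neg1_pow: "(-1)^M = (1::'a::field) \<or> (-1)^M = (-1::'a)"
proof (cases "even M")
  case True then show ?thesis by (intro disjI1) (rule neg_one_even_power)
next
  case False then show ?thesis by (intro disjI2) (rule neg_one_odd_power)
qed

lemma pm_gen: assumes "D = s * X" "s = 1 \<or> s = -1" shows "pm D (X::'a::field)"
  using assms(2)
proof
  assume "s = 1" thus ?thesis using assms(1) by (simp add: pm_def)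
next
  assume "s = -1" thus ?thesis using assms(1) by (simp add: pm_def)
qed

lemma peel:
  fixes c :: "'a::field"
  assumes len: "length qs = M" and dq: "\<And>q. q \<in> set qs \<Longrightarrow> degree q < M"
    and dP: "degree P \<le> M"
  shows "pm (det (cm (Suc M) (map (\<lambda>q. [:-c,1:] * q) qs @ [P]))) (poly P c * det (cm M qs))"
proof -
  define L where "L = [:-c, 1:]"
  define Ss where "Ss = map (\<lambda>k. L * monom 1 k) [0..<M] @ [1]"
  define T where "T = mat (Suc M) (Suc M) (\<lambda>(d,k). if k < M then (if d < M then coeff (qs!k) d else 0)
        else (if d < M then coeff (synthetic_div P c) d else poly P c))"
  let ?ps = "map (\<lambda>q. L * q) qs @ [P]"
  have T: "T \<in> carrier_mat (Suc M) (Suc M)" by (simp add: T_def)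
  have Ssd: "\<And>d. d < M \<Longrightarrow> Ss ! d = L * monom 1 d" by (simp add: Ss_def nth_append)
  have SsM: "Ss ! M = 1" by (simp add: Ss_def nth_append)
  have eqm: "cm (Suc M) ?ps = cm (Suc M) Ss * T"
  proof (rule cm_mult[OF T])
    fix k assume k: "k < Suc M"
    have split: "(\<Sum>d<Suc M. smult (T $$ (d,k)) (Ss ! d))
       = (\<Sum>d<M. smult (T $$ (d,k)) (L * monom 1 d)) + smult (T $$ (M,k)) 1"
    proof -
      have "(\<Sum>d<M. smult (T $$ (d,k)) (Ss ! d)) = (\<Sum>d<M. smult (T $$ (d,k)) (L * monom 1 d))"
        by (intro sum.cong) (auto simp: Ssd)
      thus ?thesis by (simp add: SsM)
    qed
    show "?ps ! k = (\<Sum>d<Suc M. smult (T $$ (d,k)) (Ss ! d))"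
    proof (cases "k < M")
      case True
      have q: "qs ! k \<in> set qs" using True len by auto
      have "(\<Sum>d<M. smult (T $$ (d,k)) (L * monom 1 d)) = L * (\<Sum>d<M. monom (coeff (qs!k) d) d)"
        unfolding sum_distrib_left
      proof (intro sum.cong refl)
        fix d assume d: "d \<in> {..<M}"
        have "T $$ (d,k) = coeff (qs!k) d" using d True by (simp add: T_def)
        thus "smult (T $$ (d,k)) (L * monom 1 d) = L * monom (coeff (qs!k) d) d"
          by (simp only: smult_L_monom)
      qed
      also have "\<dots> = L * qs ! k"
        using dq[OF q] by (subst sum_monoms_lt) (auto intro: coeff_eq_0)
      finally show ?thesis unfolding split using True k len by (simp add: nth_append T_def)
    next
      case False
      hence kM: "k = M" using k by auto
      have sd: "\<And>i. i \<ge> M \<Longrightarrow> coeff (synthetic_div P c) i = 0"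
      proof -
        fix i assume i: "i \<ge> M"
        show "coeff (synthetic_div P c) i = 0"
        proof (cases "degree P = 0")
          case True thus ?thesis by (simp add: synthetic_div_eq_0_iff[THEN iffD2])
        next
          case False thus ?thesis using dP i by (intro coeff_eq_0) (simp add: degree_synthetic_div)
        qed
      qed
      have "(\<Sum>d<M. smult (T $$ (d,k)) (L * monom 1 d)) = L * (\<Sum>d<M. monom (coeff (synthetic_div P c) d) d)"
        unfolding sum_distrib_left
      proof (intro sum.cong refl)
        fix d assume d: "d \<in> {..<M}"
        have "T $$ (d,k) = coeff (synthetic_div P c) d" using d kM by (simp add: T_def)
        thus "smult (T $$ (d,k)) (L * monom 1 d) = L * monom (coeff (synthetic_div P c) d) d"
          by (simp only: smult_L_monom)
      qed
      also have "\<dots> = L * synthetic_div P c" using sd by (subst sum_monoms_lt) auto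
      finally have "(\<Sum>d<Suc M. smult (T $$ (d,k)) (Ss ! d)) = L * synthetic_div P c + [:poly P c:]"
        unfolding split using kM by (simp add: T_def)
      also have "\<dots> = P" unfolding L_def by (rule synthetic_div_correct')
      finally show ?thesis using kM len by (simp add: nth_append)
    qed
  qed
  have C1: "cm (Suc M) Ss \<in> carrier_mat (Suc M) (Suc M)" by (simp add: cm_def)
  have d1: "det (cm (Suc M) ?ps) = det (cm (Suc M) Ss) * det T"
    by (rule trans[OF arg_cong[where f=det, OF eqm] det_mult[OF C1 T]])
  have d2: "det (cm (Suc M) Ss) = (-1) ^ M"
  proof -
    have C: "cm (Suc M) Ss \<in> carrier_mat (Suc M) (Suc M)" by (simp add: cm_def)
    have "det (cm (Suc M) Ss) = (\<Sum>i<Suc M. cm (Suc M) Ss $$ (i,M) * cofactor (cm (Suc M) Ss) i M)"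
      by (rule laplace_expansion_column[OF C]) simp
    also have "\<dots> = (\<Sum>i<Suc M. (if i = 0 then cofactor (cm (Suc M) Ss) i M else 0))"
    proof (intro sum.cong refl)
      fix i assume i: "i \<in> {..<Suc M}"
      have "cm (Suc M) Ss $$ (i,M) = coeff (Ss ! M) i" using i by (simp add: cm_def)
      also have "\<dots> = (if i = 0 then 1 else 0)" by (simp add: SsM coeff_1)
      finally show "cm (Suc M) Ss $$ (i,M) * cofactor (cm (Suc M) Ss) i M
          = (if i = 0 then cofactor (cm (Suc M) Ss) i M else 0)" by simp
    qed
    also have "\<dots> = cofactor (cm (Suc M) Ss) 0 M" by simp
    also have "\<dots> = (-1)^M * det (mat_delete (cm (Suc M) Ss) 0 M)" by (simp add: cofactor_def)
    also have "det (mat_delete (cm (Suc M) Ss) 0 M) = 1"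
    proof -
      let ?D = "mat_delete (cm (Suc M) Ss) 0 M"
      have D: "?D \<in> carrier_mat M M" by (simp add: mat_delete_def cm_def)
      have ent: "\<And>i k. i < M \<Longrightarrow> k < M \<Longrightarrow> ?D $$ (i,k) = (if i = k then 1 else if Suc i = k then - c else 0)"
      proof -
        fix i k assume i: "i < M" and k: "k < M"
        have "?D $$ (i,k) = coeff (Ss ! k) (Suc i)"
          using i k by (simp add: mat_delete_def cm_def insert_index_def)
        also have "\<dots> = coeff ([:-c,1:] * monom 1 k) (Suc i)" by (simp only: Ssd[OF k] L_def)
        also have "\<dots> = (if Suc i = Suc k then 1 else if Suc i = k then - c else 0)"
          by (rule coeff_lin_monom)
        finally show "?D $$ (i,k) = (if i = k then 1 else if Suc i = k then - c else 0)" by simp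
      qed
      have "upper_triangular ?D" unfolding upper_triangular_def using ent D by auto
      hence "det ?D = prod_list (diag_mat ?D)" using det_upper_triangular D by blast
      also have "\<dots> = 1" unfolding prod_list_diag_prod using D ent by (auto intro!: prod.neutral)
      finally show ?thesis .
    qed
    finally show ?thesis by simp
  qed
  have d3: "det T = poly P c * det (cm M qs)"
  proof -
    have "det T = (\<Sum>j<Suc M. T $$ (M,j) * cofactor T M j)"
      by (rule laplace_expansion_row[OF T]) simp
    also have "\<dots> = (\<Sum>j<Suc M. (if j = M then poly P c * cofactor T M j else 0))"
    proof (intro sum.cong refl)
      fix j assume j: "j \<in> {..<Suc M}"
      have "T $$ (M,j) = (if j = M then poly P c else 0)" using j by (simp add: T_def)
      thus "T $$ (M,j) * cofactor T M j = (if j = M then poly P c * cofactor T M j else 0)" by simp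
    qed
    also have "\<dots> = poly P c * cofactor T M M" by simp
    also have "cofactor T M M = det (mat_delete T M M)" by (simp add: cofactor_def)
    also have "mat_delete T M M = cm M qs"
      by (rule eq_matI) (auto simp: mat_delete_def T_def cm_def insert_index_def)
    finally show ?thesis .
  qed
  have calc: "det (cm (Suc M) ?ps) = (-1)^M * (poly P c * det (cm M qs))" by (simp only: d1 d2 d3)
  hence "pm (det (cm (Suc M) ?ps)) (poly P c * det (cm M qs))" by (rule pm_gen) (rule neg1_pow)
  thus ?thesis unfolding L_def .
qed

definition Ntot :: "nat \<Rightarrow> (nat \<Rightarrow> nat) \<Rightarrow> nat" where
  "Ntot n e = (\<Sum>l=1..n. e l)"

definition sig :: "nat \<Rightarrow> (nat \<Rightarrow> 'a::field) \<Rightarrow> (nat \<Rightarrow> nat) \<Rightarrow> 'a poly list" where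
  "sig n r e = map (\<lambda>(l,j). root_poly n r e div [:- r l, 1:] ^ j) (sigma_cols n e)"

definition tgt :: "nat \<Rightarrow> (nat \<Rightarrow> 'a::field) \<Rightarrow> (nat \<Rightarrow> nat) \<Rightarrow> 'a" where
  "tgt n r e = (\<Prod>i=1..n. \<Prod>j=i+1..n. (r i - r j) ^ (e i * e j))"

lemma sigma_cols_0: "sigma_cols 0 e = []" by (simp add: sigma_cols_def)

lemma sigma_cols_Suc:
  "sigma_cols (Suc n) e = sigma_cols n e @ map (\<lambda>j. (Suc n, j)) [1..<e (Suc n) + 1]"
  by (simp add: sigma_cols_def)

lemma Ntot_Suc: "Ntot (Suc n) e = Ntot n e + e (Suc n)"
  by (simp add: Ntot_def)

lemma length_sigma_cols: "length (sigma_cols n e) = Ntot n e"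
  by (induction n) (simp_all add: sigma_cols_0 sigma_cols_Suc Ntot_Suc, simp add: Ntot_def)

lemma set_sigma_cols: "(l,j) \<in> set (sigma_cols n e) \<longleftrightarrow> l \<in> {1..n} \<and> j \<in> {1..e l}"
proof (induction n)
  case 0 thus ?case by (simp add: sigma_cols_0)
next
  case (Suc n)
  show ?case
  proof
    assume "(l,j) \<in> set (sigma_cols (Suc n) e)"
    thus "l \<in> {1..Suc n} \<and> j \<in> {1..e l}" using Suc by (auto simp: sigma_cols_Suc)
  next
    assume a: "l \<in> {1..Suc n} \<and> j \<in> {1..e l}"
    show "(l,j) \<in> set (sigma_cols (Suc n) e)"
    proof (cases "l = Suc n")
      case True
      hence "(l,j) \<in> set (map (\<lambda>j. (Suc n, j)) [1..<e (Suc n) + 1])" using a by auto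
      thus ?thesis by (simp add: sigma_cols_Suc)
    next
      case False
      hence "(l,j) \<in> set (sigma_cols n e)" using a Suc by auto
      thus ?thesis by (simp add: sigma_cols_Suc)
    qed
  qed
qed

lemma root_poly_Suc:
  "root_poly (Suc n) r e = root_poly n r e * [:- r (Suc n), 1:] ^ e (Suc n)"
  unfolding root_poly_def by (subst prod.nat_ivl_Suc') (auto simp: mult.commute)

lemma root_poly_nz: "root_poly n r e \<noteq> 0"
  unfolding root_poly_def by (auto simp: prod_zero_iff)

lemma degree_root_poly: "degree (root_poly n r e) = Ntot n e"
proof (induction n)
  case 0 thus ?case by (simp add: root_poly_def Ntot_def)
next
  case (Suc n)
  have nz: "[:- r (Suc n), 1:] ^ e (Suc n) \<noteq> 0" by auto
  show ?case unfolding root_poly_Suc Ntot_Suc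
    by (subst degree_mult_eq[OF root_poly_nz nz]) (simp add: Suc degree_linear_power)
qed

lemma root_poly_cong: "(\<And>l. l \<in> {1..n} \<Longrightarrow> e l = e' l) \<Longrightarrow> root_poly n r e = root_poly n r e'"
  unfolding root_poly_def by (rule prod.cong) auto

lemma sigma_cols_cong: "(\<And>l. l \<in> {1..n} \<Longrightarrow> e l = e' l) \<Longrightarrow> sigma_cols n e = sigma_cols n e'"
  unfolding sigma_cols_def by (intro arg_cong[where f=concat] map_cong) auto

lemma Ntot_cong: "(\<And>l. l \<in> {1..n} \<Longrightarrow> e l = e' l) \<Longrightarrow> Ntot n e = Ntot n e'"
  unfolding Ntot_def by (rule sum.cong) auto

lemma tgt_cong: "(\<And>l. l \<in> {1..n} \<Longrightarrow> e l = e' l) \<Longrightarrow> tgt n r e = tgt n r e'"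
  unfolding tgt_def by (intro prod.cong refl) auto

lemma tgt_Suc:
  "tgt (Suc n) r e = tgt n r e * (\<Prod>i=1..n. (r i - r (Suc n)) ^ (e i * e (Suc n)))"
proof -
  have "tgt (Suc n) r e = (\<Prod>i=1..n. \<Prod>j=i+1..Suc n. (r i - r j) ^ (e i * e j))"
    unfolding tgt_def by (subst prod.nat_ivl_Suc') auto
  also have "\<dots> = (\<Prod>i=1..n. (r i - r (Suc n)) ^ (e i * e (Suc n)) * (\<Prod>j=i+1..n. (r i - r j) ^ (e i * e j)))"
    by (intro prod.cong refl, subst prod.nat_ivl_Suc') auto
  also have "\<dots> = tgt n r e * (\<Prod>i=1..n. (r i - r (Suc n)) ^ (e i * e (Suc n)))"
    unfolding tgt_def prod.distrib by (simp add: mult.commute)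
  finally show ?thesis .
qed

lemma dvd_root_poly:
  assumes "(l,j) \<in> set (sigma_cols n e)"
  shows "[:- r l, 1:] ^ j dvd root_poly n r e"
proof -
  from assms have l: "l \<in> {1..n}" and j: "j \<le> e l" by (auto simp: set_sigma_cols)
  have "[:- r l, 1:] ^ j dvd [:- r l, 1:] ^ e l" by (rule le_imp_power_dvd[OF j])
  also have "\<dots> dvd root_poly n r e" unfolding root_poly_def using l by (intro dvd_prodI) auto
  finally show ?thesis .
qed

lemma degree_sig:
  assumes "q \<in> set (sig n r e)"
  shows "degree q < Ntot n e"
proof -
  from assms obtain l j where lj: "(l,j) \<in> set (sigma_cols n e)"
    and q: "q = root_poly n r e div [:- r l, 1:] ^ j" by (auto simp: sig_def)
  have j: "j \<ge> 1" using lj by (auto simp: set_sigma_cols)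
  define h where "h = [:- r l, 1:] ^ j"
  have hd: "h dvd root_poly n r e" using dvd_root_poly[OF lj] by (simp add: h_def)
  have hnz: "h \<noteq> 0" by (simp add: h_def)
  have eq: "root_poly n r e = h * q" using hd q by (simp add: h_def)
  have qnz: "q \<noteq> 0" using eq root_poly_nz[of n r e] by auto
  have "Ntot n e = degree h + degree q"
    using degree_mult_eq[OF hnz qnz] eq degree_root_poly by metis
  moreover have "degree h = j" by (simp add: h_def degree_linear_power)
  ultimately show ?thesis using j by simp
qed

lemma Sigma_mat_cm: "Sigma_mat n r e = cm (Ntot n e) (sig n r e)"
  unfolding Sigma_mat_def cm_def Let_def
  by (rule eq_matI) (auto simp: sig_def length_sigma_cols Ntot_def split: prod.splits)

lemma main_pm:
  fixes r :: "nat \<Rightarrow> 'a::field"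
  shows "pm (det (cm (Ntot n e) (sig n r e))) (tgt n r e)"
proof (induction n arbitrary: e)
  case 0
  have "det (cm (Ntot 0 e) (sig 0 r e)) = 1" by (simp add: Ntot_def cm_def)
  moreover have "tgt 0 r e = 1" by (simp add: tgt_def)
  ultimately show ?case by (simp add: pm_refl)
next
  case (Suc n0)
  let ?n = "Suc n0"
  have "\<forall>e. e ?n = k \<longrightarrow> pm (det (cm (Ntot ?n e) (sig ?n r e))) (tgt ?n r e)" for k
  proof (induction k)
    case 0
    show ?case
    proof (intro allI impI)
      fix e :: "nat \<Rightarrow> nat" assume e0: "e ?n = 0"
      have "sig ?n r e = sig n0 r e" by (simp add: sig_def sigma_cols_Suc root_poly_Suc e0)
      moreover have "Ntot ?n e = Ntot n0 e" by (simp add: Ntot_Suc e0)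
      moreover have "tgt ?n r e = tgt n0 r e" by (simp add: tgt_Suc e0)
      ultimately show "pm (det (cm (Ntot ?n e) (sig ?n r e))) (tgt ?n r e)" using Suc.IH[of e] by simp
    qed
  next
    case (Suc m)
    show ?case
    proof (intro allI impI)
      fix e :: "nat \<Rightarrow> nat" assume he: "e ?n = Suc m"
      define e' where "e' = e(?n := m)"
      have IH: "pm (det (cm (Ntot ?n e') (sig ?n r e'))) (tgt ?n r e')"
        using Suc.IH by (simp add: e'_def)
      have ee: "\<And>l. l \<in> {1..n0} \<Longrightarrow> e' l = e l" by (auto simp: e'_def)
      have e'n: "e' ?n = m" by (simp add: e'_def)
      define c where "c = r ?n"
      define L where "L = [:- c, 1:]"
      define P where "P = root_poly n0 r e"
      have rp': "root_poly n0 r e' = P" unfolding P_def by (rule root_poly_cong[OF ee])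
      have sc': "sigma_cols n0 e' = sigma_cols n0 e" by (rule sigma_cols_cong[OF ee])
      have Nt': "Ntot n0 e' = Ntot n0 e" by (rule Ntot_cong[OF ee])
      have tg': "tgt n0 r e' = tgt n0 r e" by (rule tgt_cong[OF ee])
      have f: "root_poly ?n r e = P * L ^ Suc m" by (simp add: root_poly_Suc he P_def L_def c_def)
      have g: "root_poly ?n r e' = P * L ^ m" by (simp add: root_poly_Suc e'n rp' L_def c_def)
      have fg: "root_poly ?n r e = L * root_poly ?n r e'" unfolding f g by (simp add: ac_simps)
      have cols: "sigma_cols ?n e = sigma_cols ?n e' @ [(?n, Suc m)]"
        by (simp add: sigma_cols_Suc he e'n sc')
      have sigeq: "sig ?n r e = map (\<lambda>q. L * q) (sig ?n r e') @ [P]"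
      proof -
        have "sig ?n r e = map (\<lambda>(l,j). root_poly ?n r e div [:- r l, 1:] ^ j) (sigma_cols ?n e') @
             [root_poly ?n r e div L ^ Suc m]"
          by (simp add: sig_def cols L_def c_def)
        also have "root_poly ?n r e div L ^ Suc m = P"
          unfolding f L_def by (rule nonzero_mult_div_cancel_right, rule power_not_zero) simp
        also have "map (\<lambda>(l,j). root_poly ?n r e div [:- r l, 1:] ^ j) (sigma_cols ?n e')
            = map (\<lambda>q. L * q) (sig ?n r e')"
          unfolding sig_def map_map
        proof (rule map_cong[OF refl])
          fix x assume x: "x \<in> set (sigma_cols ?n e')"
          obtain l j where xlj: "x = (l,j)" by (cases x)
          have d: "[:- r l, 1:] ^ j dvd root_poly ?n r e'" using dvd_root_poly x xlj by blast
          show "(\<lambda>(l,j). root_poly ?n r e div [:- r l, 1:] ^ j) x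
              = ((\<lambda>q. L * q) \<circ> (\<lambda>(l,j). root_poly ?n r e' div [:- r l, 1:] ^ j)) x"
            using div_mult_swap[OF d, of L] by (simp add: xlj fg)
        qed
        finally show ?thesis .
      qed
      define M where "M = Ntot ?n e'"
      have NM: "Ntot ?n e = Suc M" by (simp add: M_def Ntot_Suc he e'n Nt')
      have pl: "pm (det (cm (Suc M) (map (\<lambda>q. [:-c,1:] * q) (sig ?n r e') @ [P])))
                 (poly P c * det (cm M (sig ?n r e')))"
      proof (rule peel)
        show "length (sig ?n r e') = M" by (simp add: sig_def length_sigma_cols M_def)
        show "\<And>q. q \<in> set (sig ?n r e') \<Longrightarrow> degree q < M" using degree_sig by (simp add: M_def)
        show "degree P \<le> M" by (simp add: P_def degree_root_poly M_def Ntot_Suc Nt')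
      qed
      hence pl': "pm (det (cm (Ntot ?n e) (sig ?n r e))) (poly P c * det (cm M (sig ?n r e')))"
        by (simp add: NM sigeq L_def)
      define x where "x = (\<lambda>i. r i - c)"
      have pP: "pm (poly P c) (\<Prod>i=1..n0. x i ^ e i)"
        unfolding P_def root_poly_def poly_prod poly_power x_def
        by (intro pm_prod pm_power) (simp add: pm_def)
      have t1: "tgt ?n r e' = tgt n0 r e * (\<Prod>i=1..n0. x i ^ (e i * m))"
        unfolding tgt_Suc tg' e'n x_def c_def using ee by (intro arg_cong2[where f="(*)"] refl prod.cong) auto
      have t2: "tgt ?n r e = tgt n0 r e * (\<Prod>i=1..n0. x i ^ (e i * Suc m))"
        unfolding tgt_Suc he x_def c_def ..
      have t3: "(\<Prod>i=1..n0. x i ^ e i) * tgt ?n r e' = tgt ?n r e"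
        unfolding t1 t2 by (simp add: mult_Suc_right power_add prod.distrib ac_simps)
      have "pm (poly P c * det (cm M (sig ?n r e'))) ((\<Prod>i=1..n0. x i ^ e i) * tgt ?n r e')"
        using pP IH by (intro pm_mult) (simp_all add: M_def)
      with pl' have "pm (det (cm (Ntot ?n e) (sig ?n r e))) ((\<Prod>i=1..n0. x i ^ e i) * tgt ?n r e')"
        by (rule pm_trans)
      thus "pm (det (cm (Ntot ?n e) (sig ?n r e))) (tgt ?n r e)" unfolding t3 .
    qed
  qed
  thus ?case by blast
qed

theorem mainTheorem10:
  fixes n :: nat and r :: "nat \<Rightarrow> 'a::field" and e :: "nat \<Rightarrow> nat"
  assumes "inj_on r {1..n}"
    and "\<And>i. i \<in> {1..n} \<Longrightarrow> e i \<ge> 1"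
  shows "(\<exists>s \<in> {1, -1}. det (Sigma_mat n r e) = s * (\<Prod>i=1..n. \<Prod>j=i+1..n. (r i - r j) ^ (e i * e j)))
       \<and> duplicant n r e = (\<Prod>i=1..n. \<Prod>j=i+1..n. (r i - r j) ^ (2 * e i * e j))"
proof -
  have p: "pm (det (Sigma_mat n r e)) (tgt n r e)"
    unfolding Sigma_mat_cm by (rule main_pm)
  have 1: "\<exists>s \<in> {1, -1}. det (Sigma_mat n r e) = s * tgt n r e"
    using p unfolding pm_def by auto
  have sq: "(det (Sigma_mat n r e))\<^sup>2 = (tgt n r e)\<^sup>2"
    using p unfolding pm_def by auto
  have "(tgt n r e)\<^sup>2 = (\<Prod>i=1..n. \<Prod>j=i+1..n. (r i - r j) ^ (2 * e i * e j))"
    unfolding tgt_def prod_power_distrib power_mult[symmetric]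
    by (intro prod.cong refl) (simp add: ac_simps)
  thus ?thesis using 1 sq unfolding duplicant_def tgt_def by simp
qed

end
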